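(* Let $u\in\mathbb{R}_+^d$ and $r\in\mathbb{R}$, and assume $I^\infty_u$ is left continuous at $r$. Then $$\lim_{\beta\to\infty}J^\beta_u(\beta r)=I^\infty_u(r).$$
   Context: Let $d\ge1$. Environment: $\{\omega(v):v\in\mathbb{Z}_+^d\}$ i.i.d. under $\mathbb{P}$ with $\mathbb{E}e^{\xi|\omega(v)|}<\infty$ for some $\xi>0$ and $\mathbb{P}\{\omega(v)\ge0\}>0$. For $v\in\mathbb{Z}_+^d$ with $\|v\|_1=m$, let $\Pi(v)$ be the set of paths $0=x_0,\dots,x_m=v$ with increments standard basis vectors, $Z^\beta_v=\sum_{x\in\Pi(v)}\exp\{\beta\sum_{j=1}^m\omega(x_j)\}$ and $T(v)=\max_{x\in\Pi(v)}\sum_{j=1}^m\omega(x_j)$ (last passage time). The rate functions $J^\beta_u(r)=-\lim_n n^{-1}\log\mathbb{P}\{\log Z^\beta_{\lfloor nu\rfloor}\ge nr\}$ and $I^\infty_u(r)=-\lim_n n^{-1}\log\mathbb{P}\{T(\lfloor nu\rfloor)\ge nr\}$ are defined by these limits (which exist), with $\lfloor nu\rfloor$ coordinatewise. *)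

theory Defs
  imports "HOL-Probability.Probability"
begin

text \<open>Lattice points of Z_+^d are functions 'd => nat for a finite nonempty index type 'd
  (so d = CARD('d) >= 1). Up-right paths from 0 to v are lists x_0,...,x_m of lattice points.\<close>

definition unit_step :: "('d \<Rightarrow> nat) \<Rightarrow> ('d \<Rightarrow> nat) \<Rightarrow> bool" where
  "unit_step a b \<longleftrightarrow> (\<exists>i. b = a(i := Suc (a i)))"

definition l1norm :: "('d::finite \<Rightarrow> nat) \<Rightarrow> nat" where
  "l1norm v = (\<Sum>i\<in>UNIV. v i)"

definition paths :: "('d::finite \<Rightarrow> nat) \<Rightarrow> ('d \<Rightarrow> nat) list set" where
  "paths v = {xs. length xs = Suc (l1norm v) \<and> xs ! 0 = (\<lambda>_. 0) \<and> xs ! l1norm v = v \<and>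
                 (\<forall>j < l1norm v. unit_step (xs ! j) (xs ! Suc j))}"

definition path_weight :: "(('d::finite \<Rightarrow> nat) \<Rightarrow> real) \<Rightarrow> ('d \<Rightarrow> nat) \<Rightarrow> ('d \<Rightarrow> nat) list \<Rightarrow> real" where
  "path_weight w v xs = (\<Sum>j\<in>{1..l1norm v}. w (xs ! j))"

definition partition_fn :: "real \<Rightarrow> (('d::finite \<Rightarrow> nat) \<Rightarrow> real) \<Rightarrow> ('d \<Rightarrow> nat) \<Rightarrow> real" where
  "partition_fn \<beta> w v = (\<Sum>xs\<in>paths v. exp (\<beta> * path_weight w v xs))"

definition lpp_time :: "(('d::finite \<Rightarrow> nat) \<Rightarrow> real) \<Rightarrow> ('d \<Rightarrow> nat) \<Rightarrow> real" where
  "lpp_time w v = Max (path_weight w v ` paths v)"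

definition floor_scale :: "nat \<Rightarrow> ('d \<Rightarrow> real) \<Rightarrow> ('d \<Rightarrow> nat)" where
  "floor_scale n u = (\<lambda>i. nat \<lfloor>real n * u i\<rfloor>)"

definition lnE :: "real \<Rightarrow> ereal" where
  "lnE p = (if p \<le> 0 then -\<infinity> else ereal (ln p))"

definition J_seq :: "'a measure \<Rightarrow> (('d::finite \<Rightarrow> nat) \<Rightarrow> 'a \<Rightarrow> real) \<Rightarrow> real \<Rightarrow> ('d \<Rightarrow> real) \<Rightarrow> real \<Rightarrow> nat \<Rightarrow> ereal" where
  "J_seq M \<omega> \<beta> u r n =
     lnE (measure M {x \<in> space M. ln (partition_fn \<beta> (\<lambda>v. \<omega> v x) (floor_scale n u)) \<ge> real n * r})
       / ereal (real n)"

definition I_seq :: "'a measure \<Rightarrow> (('d::finite \<Rightarrow> nat) \<Rightarrow> 'a \<Rightarrow> real) \<Rightarrow> ('d \<Rightarrow> real) \<Rightarrow> real \<Rightarrow> nat \<Rightarrow> ereal" where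
  "I_seq M \<omega> u r n =
     lnE (measure M {x \<in> space M. lpp_time (\<lambda>v. \<omega> v x) (floor_scale n u) \<ge> real n * r})
       / ereal (real n)"

definition J_rate :: "'a measure \<Rightarrow> (('d::finite \<Rightarrow> nat) \<Rightarrow> 'a \<Rightarrow> real) \<Rightarrow> real \<Rightarrow> ('d \<Rightarrow> real) \<Rightarrow> real \<Rightarrow> ereal" where
  "J_rate M \<omega> \<beta> u r = - lim (J_seq M \<omega> \<beta> u r)"

definition I_rate :: "'a measure \<Rightarrow> (('d::finite \<Rightarrow> nat) \<Rightarrow> 'a \<Rightarrow> real) \<Rightarrow> ('d \<Rightarrow> real) \<Rightarrow> real \<Rightarrow> ereal" where
  "I_rate M \<omega> u r = - lim (I_seq M \<omega> u r)"

end

theory Submission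
  imports Defs
begin

definition dir :: "('d \<Rightarrow> nat) \<Rightarrow> ('d \<Rightarrow> nat) \<Rightarrow> 'd" where
  "dir a b = (SOME i. b = a(i := Suc (a i)))"

lemma dir_step: "unit_step a b \<Longrightarrow> b = a(dir a b := Suc (a (dir a b)))"
  unfolding unit_step_def dir_def by (rule someI_ex)

lemma paths_inj:
  assumes "xs \<in> paths v" "ys \<in> paths v"
    and "map (\<lambda>j. dir (xs!j) (xs!Suc j)) [0..<l1norm v] = map (\<lambda>j. dir (ys!j) (ys!Suc j)) [0..<l1norm v]"
  shows "xs = ys"
proof -
  have eq: "\<And>j. j < l1norm v \<Longrightarrow> dir (xs!j) (xs!Suc j) = dir (ys!j) (ys!Suc j)"
    using assms(3) unfolding map_eq_conv by auto
  have "\<forall>j. j \<le> l1norm v \<longrightarrow> xs!j = ys!j"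
  proof (intro allI)
    fix j show "j \<le> l1norm v \<longrightarrow> xs!j = ys!j"
    proof (induction j)
      case 0 then show ?case using assms(1,2) by (simp add: paths_def)
    next
      case (Suc j)
      show ?case
      proof
        assume j: "Suc j \<le> l1norm v"
        hence h: "xs!j = ys!j" using Suc by simp
        have sx: "unit_step (xs!j) (xs!Suc j)" "unit_step (ys!j) (ys!Suc j)"
          using assms(1,2) j by (auto simp: paths_def)
        show "xs!Suc j = ys!Suc j"
          using dir_step[OF sx(1)] dir_step[OF sx(2)] eq[of j] j h by simp
      qed
    qed
  qed
  moreover have "length xs = length ys" using assms(1,2) by (simp add: paths_def)
  ultimately show ?thesis using assms(1) by (intro nth_equalityI) (auto simp: paths_def)
qed

lemma paths_finite_card:
  fixes v :: "'d::finite \<Rightarrow> nat"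
  shows "finite (paths v) \<and> card (paths v) \<le> CARD('d) ^ l1norm v"
proof -
  define f where "f xs = map (\<lambda>j. dir (xs!j) (xs!Suc j)) [0..<l1norm v]" for xs :: "('d \<Rightarrow> nat) list"
  have inj: "inj_on f (paths v)" unfolding inj_on_def f_def using paths_inj by blast
  have sub: "f ` paths v \<subseteq> {xs. set xs \<subseteq> (UNIV::'d set) \<and> length xs = l1norm v}"
    by (auto simp: f_def)
  have fin: "finite {xs. set xs \<subseteq> (UNIV::'d set) \<and> length xs = l1norm v}"
    by (rule finite_lists_length_eq) simp
  have "finite (f ` paths v)" using finite_subset[OF sub fin] .
  hence f1: "finite (paths v)" using inj finite_imageD by blast
  have "card (paths v) = card (f ` paths v)" using inj by (simp add: card_image)
  also have "\<dots> \<le> card {xs. set xs \<subseteq> (UNIV::'d set) \<and> length xs = l1norm v}"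
    by (rule card_mono[OF fin sub])
  also have "\<dots> = CARD('d) ^ l1norm v" by (rule card_lists_length_eq) simp
  finally show ?thesis using f1 by simp
qed

lemma paths_nonempty:
  fixes v :: "'d::finite \<Rightarrow> nat"
  shows "paths v \<noteq> {}"
proof -
  have "\<forall>v::'d\<Rightarrow>nat. l1norm v = m \<longrightarrow> paths v \<noteq> {}" for m
  proof (induction m)
    case 0
    show ?case
    proof (intro allI impI)
      fix v :: "'d \<Rightarrow> nat" assume "l1norm v = 0"
      hence "v = (\<lambda>_. 0)" by (auto simp: l1norm_def)
      hence "[v] \<in> paths v" using \<open>l1norm v = 0\<close> by (simp add: paths_def)
      thus "paths v \<noteq> {}" by blast
    qed
  next
    case (Suc m)
    show ?case
    proof (intro allI impI)
      fix v :: "'d \<Rightarrow> nat" assume v: "l1norm v = Suc m"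
      obtain i where i: "v i > 0"
      proof -
        have "\<not> (\<forall>i. v i = 0)"
        proof
          assume "\<forall>i. v i = 0" hence "sum v UNIV = 0" by simp
          with v show False by (simp add: l1norm_def)
        qed
        thus ?thesis using that by auto
      qed
      define v' where "v' = v(i := v i - 1)"
      have vv: "v = v'(i := Suc (v' i))" using i by (auto simp: v'_def)
      have "l1norm v = l1norm v' + 1"
      proof -
        have a: "sum v UNIV = v i + sum v (UNIV - {i})" by (rule sum.remove) auto
        have b: "sum v' UNIV = v' i + sum v' (UNIV - {i})" by (rule sum.remove) auto
        have c: "sum v (UNIV - {i}) = sum v' (UNIV - {i})" by (rule sum.cong) (auto simp: v'_def)
        have d: "v' i = v i - 1" by (simp add: v'_def)
        have "sum v UNIV = sum v' UNIV + 1" unfolding a b c d using i by simp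
        thus ?thesis unfolding l1norm_def .
      qed
      hence "l1norm v' = m" using v by simp
      with Suc obtain xs where xs: "xs \<in> paths v'" by blast
      have L: "length xs = Suc m" "xs!0 = (\<lambda>_. 0)" "xs!m = v'"
        "\<And>j. j < m \<Longrightarrow> unit_step (xs!j) (xs!Suc j)"
        using xs \<open>l1norm v' = m\<close> unfolding paths_def by auto
      have st: "\<And>j. j < Suc m \<Longrightarrow> unit_step ((xs@[v])!j) ((xs@[v])!Suc j)"
      proof -
        fix j assume j: "j < Suc m"
        show "unit_step ((xs@[v])!j) ((xs@[v])!Suc j)"
        proof (cases "j < m")
          case True thus ?thesis using L by (simp add: nth_append)
        next
          case False hence "j = m" using j by simp
          thus ?thesis using L vv unfolding unit_step_def by (auto simp: nth_append)
        qed
      qed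
      have "xs @ [v] \<in> paths v"
        unfolding paths_def using L st v by (auto simp: nth_append)
      thus "paths v \<noteq> {}" by blast
    qed
  qed
  thus ?thesis by blast
qed


lemma Z_bounds:
  fixes v :: "'d::finite \<Rightarrow> nat"
  assumes b: "\<beta> > 0"
  shows "exp (\<beta> * lpp_time w v) \<le> partition_fn \<beta> w v"
    and "partition_fn \<beta> w v \<le> real (card (paths v)) * exp (\<beta> * lpp_time w v)"
proof -
  have fin: "finite (paths v)" using paths_finite_card by blast
  have ne: "paths v \<noteq> {}" by (rule paths_nonempty)
  have "lpp_time w v \<in> path_weight w v ` paths v"
    unfolding lpp_time_def using fin ne by (intro Max_in) auto
  then obtain xs where xs: "xs \<in> paths v" "lpp_time w v = path_weight w v xs" by blast
  show "exp (\<beta> * lpp_time w v) \<le> partition_fn \<beta> w v"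
    unfolding partition_fn_def xs(2)
    by (rule member_le_sum[OF xs(1)]) (auto simp: fin)
  have le: "\<And>ys. ys \<in> paths v \<Longrightarrow> path_weight w v ys \<le> lpp_time w v"
    unfolding lpp_time_def using fin by (intro Max_ge) auto
  have "partition_fn \<beta> w v \<le> (\<Sum>ys\<in>paths v. exp (\<beta> * lpp_time w v))"
    unfolding partition_fn_def
    by (rule sum_mono) (use le b in \<open>auto intro: mult_left_mono\<close>)
  thus "partition_fn \<beta> w v \<le> real (card (paths v)) * exp (\<beta> * lpp_time w v)" by simp
qed

lemma l1_floor:
  fixes u :: "'d::finite \<Rightarrow> real"
  assumes "\<forall>i. u i \<ge> 0"
  shows "real (l1norm (floor_scale n u)) \<le> real n * (\<Sum>i\<in>UNIV. u i)"
proof -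
  have "real (l1norm (floor_scale n u)) = (\<Sum>i\<in>UNIV. real (nat \<lfloor>real n * u i\<rfloor>))"
    by (simp add: l1norm_def floor_scale_def)
  also have "\<dots> \<le> (\<Sum>i\<in>UNIV. real n * u i)"
  proof (rule sum_mono)
    fix i
    have "0 \<le> real n * u i" using assms by simp
    thus "real (nat \<lfloor>real n * u i\<rfloor>) \<le> real n * u i" by linarith
  qed
  finally show ?thesis by (simp add: sum_distrib_left)
qed

lemma key_ineq:
  fixes v :: "'d::finite \<Rightarrow> nat"
  assumes b: "\<beta> > 0" and m: "real (l1norm v) * ln (real CARD('d)) \<le> K"
    and h: "ln (partition_fn \<beta> w v) \<ge> t"
  shows "\<beta> * lpp_time w v \<ge> t - K"
proof -
  have fc: "card (paths v) \<le> CARD('d) ^ l1norm v" using paths_finite_card by blast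
  have cpos: "card (paths v) > 0" using paths_finite_card paths_nonempty
    by (metis card_gt_0_iff)
  have "ln (partition_fn \<beta> w v) \<le> ln (real (card (paths v)) * exp (\<beta> * lpp_time w v))"
    using Z_bounds[OF b, of w v] by (intro ln_mono) (auto intro: order.strict_trans2[OF exp_gt_zero])
  also have "\<dots> = ln (real (card (paths v))) + \<beta> * lpp_time w v"
    using cpos by (simp add: ln_mult)
  also have "ln (real (card (paths v))) \<le> ln (real (CARD('d) ^ l1norm v))"
    using cpos fc by (intro ln_mono) (auto simp del: of_nat_power)
  also have "\<dots> = real (l1norm v) * ln (real CARD('d))"
    by (simp add: ln_realpow)
  finally show ?thesis using m h by linarith
qed


lemma lnE_mono: "p \<le> q \<Longrightarrow> lnE p \<le> lnE q"
  unfolding lnE_def by auto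

lemma rate_seq_le:
  assumes "convergent X" "convergent Y" "\<And>n. n > 0 \<Longrightarrow> X n \<le> (Y n :: ereal)"
  shows "- lim Y \<le> - lim X"
proof -
  have "lim X \<le> lim Y"
    using assms(1,2)[unfolded convergent_LIMSEQ_iff] assms(3)
    by (intro LIMSEQ_le[of X _ Y]) (auto intro!: exI[of _ 1])
  thus ?thesis by simp
qed

theorem proposition2p6:
  fixes M :: "'a measure" and \<omega> :: "('d::finite \<Rightarrow> nat) \<Rightarrow> 'a \<Rightarrow> real"
    and u :: "'d \<Rightarrow> real" and r :: real
  assumes "prob_space M"
    and "prob_space.indep_vars M (\<lambda>_. borel) \<omega> UNIV"
    and "\<forall>v. distr M borel (\<omega> v) = distr M borel (\<omega> (\<lambda>_. 0))"
    and "\<exists>\<xi>>0. integrable M (\<lambda>x. exp (\<xi> * \<bar>\<omega> (\<lambda>_. 0) x\<bar>))"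
    and "measure M {x \<in> space M. \<omega> (\<lambda>_. 0) x \<ge> 0} > 0"
    and "\<forall>i. u i \<ge> 0"
    and "\<forall>\<beta>>0. convergent (J_seq M \<omega> \<beta> u (\<beta> * r))"
    and "\<forall>s. convergent (I_seq M \<omega> u s)"
    and "(I_rate M \<omega> u \<longlongrightarrow> I_rate M \<omega> u r) (at_left r)"
  shows "((\<lambda>\<beta>. J_rate M \<omega> \<beta> u (\<beta> * r)) \<longlongrightarrow> I_rate M \<omega> u r) at_top"
proof -
  interpret prob_space M by (rule assms(1))
  have rv[measurable]: "\<And>v. \<omega> v \<in> borel_measurable M"
    using assms(2) unfolding indep_vars_def2 by auto
  define S where "S = (\<Sum>i\<in>UNIV. u i)"
  define c where "c = S * ln (real CARD('d)) + 1"
  have S0: "S \<ge> 0" unfolding S_def using assms(6) by (simp add: sum_nonneg)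
  have lnd: "ln (real CARD('d)) \<ge> 0" by simp
  have c0: "c > 0" unfolding c_def using mult_nonneg_nonneg[OF S0 lnd] by linarith
  have measJ: "{x \<in> space M. ln (partition_fn \<beta> (\<lambda>v. \<omega> v x) w) \<ge> t} \<in> sets M"
    for \<beta> t and w :: "'d \<Rightarrow> nat"
    unfolding partition_fn_def path_weight_def by measurable
  have measI: "{x \<in> space M. lpp_time (\<lambda>v. \<omega> v x) w \<ge> t} \<in> sets M"
    for t and w :: "'d \<Rightarrow> nat"
  proof -
    have fin: "finite (paths w)" using paths_finite_card by blast
    have "(\<lambda>x. Max ((\<lambda>xs. (\<Sum>j\<in>{1..l1norm w}. \<omega> (xs ! j) x)) ` paths w)) \<in> borel_measurable M"
      by (rule borel_measurable_Max[OF fin]) measurable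
    hence "(\<lambda>x. lpp_time (\<lambda>v. \<omega> v x) w) \<in> borel_measurable M"
      unfolding lpp_time_def path_weight_def by simp
    thus ?thesis by measurable
  qed
  have bounds: "I_rate M \<omega> u (r - c / \<beta>) \<le> J_rate M \<omega> \<beta> u (\<beta> * r) \<and>
                J_rate M \<omega> \<beta> u (\<beta> * r) \<le> I_rate M \<omega> u r" if b: "\<beta> > 0" for \<beta>
  proof
    show "J_rate M \<omega> \<beta> u (\<beta> * r) \<le> I_rate M \<omega> u r"
      unfolding J_rate_def I_rate_def
    proof (rule rate_seq_le)
      show "convergent (I_seq M \<omega> u r)" using assms(8) by blast
      show "convergent (J_seq M \<omega> \<beta> u (\<beta> * r))" using assms(7) b by blast
      fix n :: nat assume n: "n > 0"
      have sub: "{x \<in> space M. lpp_time (\<lambda>v. \<omega> v x) (floor_scale n u) \<ge> real n * r}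
          \<subseteq> {x \<in> space M. ln (partition_fn \<beta> (\<lambda>v. \<omega> v x) (floor_scale n u)) \<ge> real n * (\<beta> * r)}"
      proof safe
        fix x assume x: "real n * r \<le> lpp_time (\<lambda>v. \<omega> v x) (floor_scale n u)"
        let ?T = "lpp_time (\<lambda>v. \<omega> v x) (floor_scale n u)"
        have "real n * (\<beta> * r) = \<beta> * (real n * r)" by simp
        also have "\<dots> \<le> \<beta> * ?T" using x b by (intro mult_left_mono) auto
        also have "\<dots> = ln (exp (\<beta> * ?T))" by simp
        also have "\<dots> \<le> ln (partition_fn \<beta> (\<lambda>v. \<omega> v x) (floor_scale n u))"
          using Z_bounds(1)[OF b] by (intro ln_mono) auto
        finally show "real n * (\<beta> * r) \<le> ln (partition_fn \<beta> (\<lambda>v. \<omega> v x) (floor_scale n u))" .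
      qed
      show "I_seq M \<omega> u r n \<le> J_seq M \<omega> \<beta> u (\<beta> * r) n"
        unfolding I_seq_def J_seq_def using n
        by (intro ereal_divide_right_mono lnE_mono finite_measure_mono[OF sub measJ]) auto
    qed
    show "I_rate M \<omega> u (r - c / \<beta>) \<le> J_rate M \<omega> \<beta> u (\<beta> * r)"
      unfolding J_rate_def I_rate_def
    proof (rule rate_seq_le)
      show "convergent (I_seq M \<omega> u (r - c / \<beta>))" using assms(8) by blast
      show "convergent (J_seq M \<omega> \<beta> u (\<beta> * r))" using assms(7) b by blast
      fix n :: nat assume n: "n > 0"
      have sub: "{x \<in> space M. ln (partition_fn \<beta> (\<lambda>v. \<omega> v x) (floor_scale n u)) \<ge> real n * (\<beta> * r)}
          \<subseteq> {x \<in> space M. lpp_time (\<lambda>v. \<omega> v x) (floor_scale n u) \<ge> real n * (r - c / \<beta>)}"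
      proof safe
        fix x assume x: "real n * (\<beta> * r) \<le> ln (partition_fn \<beta> (\<lambda>v. \<omega> v x) (floor_scale n u))"
        let ?T = "lpp_time (\<lambda>v. \<omega> v x) (floor_scale n u)"
        have m1: "real (l1norm (floor_scale n u)) * ln (real CARD('d)) \<le> real n * S * ln (real CARD('d))"
          using l1_floor[OF assms(6), of n] lnd unfolding S_def by (intro mult_right_mono) auto
        have m2: "real n * S * ln (real CARD('d)) \<le> real n * c"
          unfolding c_def by (simp add: algebra_simps)
        have "\<beta> * ?T \<ge> real n * (\<beta> * r) - real n * c"
          by (rule key_ineq[OF b _ x]) (use m1 m2 in linarith)
        moreover have "\<beta> * (real n * (r - c / \<beta>)) = real n * (\<beta> * r) - real n * c"
          using b by (simp add: field_simps)
        ultimately have "\<beta> * (real n * (r - c / \<beta>)) \<le> \<beta> * ?T" by simp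
        thus "real n * (r - c / \<beta>) \<le> ?T" using b by simp
      qed
      show "J_seq M \<omega> \<beta> u (\<beta> * r) n \<le> I_seq M \<omega> u (r - c / \<beta>) n"
        unfolding I_seq_def J_seq_def using n
        by (intro ereal_divide_right_mono lnE_mono finite_measure_mono[OF sub measI]) auto
    qed
  qed
  have lim1: "((\<lambda>\<beta>. r - c / \<beta>) \<longlongrightarrow> r) at_top"
  proof -
    have "((\<lambda>\<beta>::real. c / \<beta>) \<longlongrightarrow> 0) at_top"
      by (rule tendsto_divide_0[OF tendsto_const filterlim_at_top_imp_at_infinity[OF filterlim_ident]])
    hence "((\<lambda>\<beta>. r - c / \<beta>) \<longlongrightarrow> r - 0) at_top" by (intro tendsto_diff tendsto_const)
    thus ?thesis by simp
  qed
  have lim2: "filterlim (\<lambda>\<beta>. r - c / \<beta>) (at_left r) at_top"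
    by (rule tendsto_imp_filterlim_at_left[OF lim1])
       (use eventually_gt_at_top[of 0] in \<open>eventually_elim, use c0 in simp\<close>)
  have lim3: "((\<lambda>\<beta>. I_rate M \<omega> u (r - c / \<beta>)) \<longlongrightarrow> I_rate M \<omega> u r) at_top"
    using filterlim_compose[OF assms(9) lim2] .
  show ?thesis
  proof (rule tendsto_sandwich[OF _ _ lim3 tendsto_const])
    show "\<forall>\<^sub>F \<beta> in at_top. I_rate M \<omega> u (r - c / \<beta>) \<le> J_rate M \<omega> \<beta> u (\<beta> * r)"
      using eventually_gt_at_top[of "0::real"] by eventually_elim (use bounds in blast)
    show "\<forall>\<^sub>F \<beta> in at_top. J_rate M \<omega> \<beta> u (\<beta> * r) \<le> I_rate M \<omega> u r"
      using eventually_gt_at_top[of "0::real"] by eventually_elim (use bounds in blast)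
  qed
qed

end
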